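(* Let $f_1,f_2\in S_3$ be linearly independent. Then $\dim\big(\pi_{1,2}P_\xi([f_1,f_2])\big)=2$ for almost every $\xi\in\mathbb{R}^2$.
   Context: For $j\ge0$, $S_j$ is the real vector space of homogeneous polynomials of degree $j$ in the variables $r,s$ (so $S_0=[1]$, $S_1=[r,s]$, $S_2=[r^2,rs,s^2]$, $S_3=[r^3,r^2s,rs^2,s^3]$); $[\cdot]$ denotes linear span. For $\xi=(a,b)\in\mathbb{R}^2$ and a polynomial $f$, $P_\xi f$ is the second-order Taylor polynomial of $f$ at $\xi$: $P_\xi f(r,s)=f(\xi)+\partial_rf(\xi)(r-a)+\partial_sf(\xi)(s-b)+\frac12\partial_{rr}f(\xi)(r-a)^2+\partial_{rs}f(\xi)(r-a)(s-b)+\frac12\partial_{ss}f(\xi)(s-b)^2\in S_0\oplus S_1\oplus S_2$. $\pi_{1,2}$ is the projection of $S_0\oplus S_1\oplus S_2$ onto $S_1\oplus S_2$ along $S_0$. *)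

theory Defs
  imports "HOL-Analysis.Analysis" "HOL-Library.Function_Algebras"
begin

text \<open>Polynomials in the variables r, s are represented as real functions on pairs (r,s).\<close>

type_synonym rfun = "real \<times> real \<Rightarrow> real"

definition fscale :: "real \<Rightarrow> rfun \<Rightarrow> rfun" where
  "fscale c f = (\<lambda>x. c * f x)"

definition S3 :: "rfun set" where
  "S3 = {(\<lambda>(r,s). a * r^3 + b * r^2 * s + c * r * s^2 + d * s^3) | a b c d. True}"

definition d_r :: "rfun \<Rightarrow> rfun" where
  "d_r f = (\<lambda>(a,b). deriv (\<lambda>r. f (r,b)) a)"
definition d_s :: "rfun \<Rightarrow> rfun" where
  "d_s f = (\<lambda>(a,b). deriv (\<lambda>s. f (a,s)) b)"

definition taylor2 :: "real \<times> real \<Rightarrow> rfun \<Rightarrow> rfun" where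
  "taylor2 xi f = (case xi of (a,b) \<Rightarrow> (\<lambda>(r,s).
      f (a,b) + d_r f (a,b) * (r - a) + d_s f (a,b) * (s - b)
      + 1/2 * d_r (d_r f) (a,b) * (r - a)^2
      + d_s (d_r f) (a,b) * (r - a) * (s - b)
      + 1/2 * d_s (d_s f) (a,b) * (s - b)^2))"

text \<open>Projection of S_0 + S_1 + S_2 onto S_1 + S_2 along S_0: removes the constant
  term, which for such a polynomial g is g(0,0).\<close>
definition pi12 :: "rfun \<Rightarrow> rfun" where
  "pi12 g = (\<lambda>x. g x - g (0,0))"

end

theory Submission imports Defs "HOL-Computational_Algebra.Polynomial" begin

interpretation fv: vector_space fscale
  by unfold_locales (auto simp: fscale_def algebra_simps fun_eq_iff)

definition cub :: "real \<Rightarrow> real \<Rightarrow> real \<Rightarrow> real \<Rightarrow> rfun" where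
  "cub A B C D = (\<lambda>(r,s). A * r^3 + B * r^2 * s + C * r * s^2 + D * s^3)"

lemma d_r_I: assumes "\<And>a b. ((\<lambda>r. f (r,b)) has_real_derivative g (a,b)) (at a)"
  shows "d_r f = g"
  using assms by (auto simp: d_r_def fun_eq_iff intro!: DERIV_imp_deriv)
lemma d_s_I: assumes "\<And>a b. ((\<lambda>s. f (a,s)) has_real_derivative g (a,b)) (at b)"
  shows "d_s f = g"
  using assms by (auto simp: d_s_def fun_eq_iff intro!: DERIV_imp_deriv)

lemma dr1: "d_r (cub A B C D) = (\<lambda>(a,b). 3*A*a^2 + 2*B*a*b + C*b^2)"
  by (rule d_r_I) (auto simp: cub_def intro!: derivative_eq_intros simp: power2_eq_square algebra_simps)
lemma ds1: "d_s (cub A B C D) = (\<lambda>(a,b). B*a^2 + 2*C*a*b + 3*D*b^2)"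
  by (rule d_s_I) (auto simp: cub_def intro!: derivative_eq_intros simp: power2_eq_square algebra_simps)
lemma drr: "d_r (d_r (cub A B C D)) = (\<lambda>(a,b). 6*A*a + 2*B*b)"
  unfolding dr1 by (rule d_r_I) (auto intro!: derivative_eq_intros simp: power2_eq_square algebra_simps)
lemma dsr: "d_s (d_r (cub A B C D)) = (\<lambda>(a,b). 2*B*a + 2*C*b)"
  unfolding dr1 by (rule d_s_I) (auto intro!: derivative_eq_intros simp: power2_eq_square algebra_simps)
lemma dss: "d_s (d_s (cub A B C D)) = (\<lambda>(a,b). 2*C*a + 6*D*b)"
  unfolding ds1 by (rule d_s_I) (auto intro!: derivative_eq_intros simp: power2_eq_square algebra_simps)

definition TT :: "real \<times> real \<Rightarrow> rfun \<Rightarrow> rfun" where "TT xi f = pi12 (taylor2 xi f)"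

lemma TT_lin: "TT xi (cub (k1*A1+k2*A2) (k1*B1+k2*B2) (k1*C1+k2*C2) (k1*D1+k2*D2))
   = fscale k1 (TT xi (cub A1 B1 C1 D1)) + fscale k2 (TT xi (cub A2 B2 C2 D2))"
  by (cases xi) (simp only: TT_def pi12_def taylor2_def drr dsr dss, simp only: dr1 ds1, auto simp: fscale_def fun_eq_iff cub_def algebra_simps power2_eq_square)

lemma TT_formula: "TT (a,b) (cub A B C D) = (\<lambda>(r,s). - (3*A*a^2 + 2*B*a*b + C*b^2) * r
   - (B*a^2 + 2*C*a*b + 3*D*b^2) * s + (3*A*a + B*b) * r^2 + 2*(B*a + C*b)* r * s + (C*a + 3*D*b) * s^2)"
  by (simp only: TT_def pi12_def taylor2_def drr dsr dss, simp only: dr1 ds1, auto simp: fun_eq_iff cub_def algebra_simps power2_eq_square)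

lemma TT_zero: assumes "TT (a,b) (cub A B C D) = 0"
  shows "3*A*a + B*b = 0" "B*a + C*b = 0" "C*a + 3*D*b = 0"
proof -
  have z: "\<And>x. TT (a,b) (cub A B C D) x = 0" using assms by simp
  note e = z[unfolded TT_formula, simplified]
  from e[of "(1,0)"] e[of "(-1,0)"] show "3*A*a + B*b = 0" by (simp add: algebra_simps power2_eq_square)
  from e[of "(0,1)"] e[of "(0,-1)"] show "C*a + 3*D*b = 0" by (simp add: algebra_simps power2_eq_square)
  from e[of "(1,0)"] e[of "(-1,0)"] e[of "(0,1)"] e[of "(0,-1)"] e[of "(1,1)"] e[of "(-1,-1)"]
  show "B*a + C*b = 0" by (simp add: algebra_simps power2_eq_square)
qed

lemma cub_lin: "fscale k1 (cub A1 B1 C1 D1) + fscale k2 (cub A2 B2 C2 D2) =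
   cub (k1*A1+k2*A2) (k1*B1+k2*B2) (k1*C1+k2*C2) (k1*D1+k2*D2)"
  by (auto simp: fscale_def cub_def fun_eq_iff algebra_simps)

lemma span2: "fv.span {x, y} = {fscale k1 x + fscale k2 y | k1 k2. True}"
proof -
  have "z \<in> fv.span {x, y} \<longleftrightarrow> (\<exists>k1 k2. z = fscale k1 x + fscale k2 y)" for z
    unfolding fv.span_breakdown_eq fv.span_singleton
  proof
    assume "\<exists>k. z - fscale k x \<in> range (\<lambda>k. fscale k y)"
    then obtain k k' where "z - fscale k x = fscale k' y" by blast
    then have "z = fscale k x + fscale k' y" by (metis diff_add_cancel add.commute)
    then show "\<exists>k1 k2. z = fscale k1 x + fscale k2 y" by blast
  next
    assume "\<exists>k1 k2. z = fscale k1 x + fscale k2 y"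
    then obtain k1 k2 where "z = fscale k1 x + fscale k2 y" by blast
    then have "z - fscale k1 x = fscale k2 y" by simp
    then show "\<exists>k. z - fscale k x \<in> range (\<lambda>k. fscale k y)" by blast
  qed
  then show ?thesis by auto
qed

lemma negl_line: assumes "p \<noteq> 0 \<or> q \<noteq> 0"
  shows "negligible {x::real\<times>real. p * fst x + q * snd x = 0}"
proof -
  have "{x::real\<times>real. p * fst x + q * snd x = 0} = {x. (p,q) \<bullet> x = 0}"
    by (auto simp: inner_prod_def)
  moreover have "negligible {x::real\<times>real. (p,q) \<bullet> x = 0}"
    by (rule negligible_hyperplane) (use assms in \<open>auto simp: zero_prod_def\<close>)
  ultimately show ?thesis by simp
qed

lemma negl_quad: assumes "al \<noteq> 0 \<or> be \<noteq> 0 \<or> ga \<noteq> 0"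
  shows "negligible {x::real\<times>real. al * (fst x)^2 + be * fst x * snd x + ga * (snd x)^2 = 0}"
proof (cases "al = 0")
  case True
  have "{x::real\<times>real. al * (fst x)^2 + be * fst x * snd x + ga * (snd x)^2 = 0}
     \<subseteq> {x. 0 * fst x + 1 * snd x = 0} \<union> {x. be * fst x + ga * snd x = 0}"
  proof
    fix x :: "real\<times>real" assume "x \<in> {x::real\<times>real. al * (fst x)^2 + be * fst x * snd x + ga * (snd x)^2 = 0}"
    then have "snd x * (be * fst x + ga * snd x) = 0" using True by (simp add: power2_eq_square algebra_simps)
    then show "x \<in> {x. 0 * fst x + 1 * snd x = 0} \<union> {x. be * fst x + ga * snd x = 0}" by auto
  qed
  moreover have "negligible ({x::real\<times>real. 0 * fst x + 1 * snd x = 0} \<union> {x. be * fst x + ga * snd x = 0})"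
  proof -
    have "negligible {x::real\<times>real. 0 * fst x + 1 * snd x = 0}" by (rule negl_line) simp
    moreover have "negligible {x::real\<times>real. be * fst x + ga * snd x = 0}"
      by (rule negl_line) (use assms True in auto)
    ultimately show ?thesis by simp
  qed
  ultimately show ?thesis using negligible_subset by blast
next
  case False
  define R where "R = {t. poly [:ga, be, al:] t = 0}"
  have fR: "finite R" unfolding R_def by (rule poly_roots_finite) (use False in auto)
  have "{x::real\<times>real. al * (fst x)^2 + be * fst x * snd x + ga * (snd x)^2 = 0}
     \<subseteq> {(0,0)} \<union> \<Union> ((\<lambda>t. {x. fst x = t * snd x}) ` R)"
  proof
    fix x :: "real \<times> real"
    assume x: "x \<in> {x::real\<times>real. al * (fst x)^2 + be * fst x * snd x + ga * (snd x)^2 = 0}"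
    obtain a b where xab: "x = (a,b)" by (cases x)
    show "x \<in> {(0,0)} \<union> \<Union> ((\<lambda>t. {x. fst x = t * snd x}) ` R)"
    proof (cases "b = 0")
      case True
      then have "al * a^2 = 0" using x xab by simp
      then have "a = 0" using False by simp
      then show ?thesis using xab True by simp
    next
      case b: False
      have "poly [:ga, be, al:] (a/b) = (al * a^2 + be * a * b + ga * b^2) / b^2"
        using b by (simp add: field_simps power2_eq_square)
      also have "\<dots> = 0" using x xab by simp
      finally have "a/b \<in> R" by (simp add: R_def)
      moreover have "a = (a/b) * b" using b by simp
      ultimately have "x \<in> \<Union> ((\<lambda>t. {x. fst x = t * snd x}) ` R)"
        using xab by (intro UN_I[of "a/b"]) auto
      then show ?thesis by (rule UnI2)
    qed
  qed
  moreover have "negligible ({(0::real,0::real)} \<union> \<Union> ((\<lambda>t. {x::real\<times>real. fst x = t * snd x}) ` R))"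
  proof (rule negligible_Un)
    show "negligible {(0::real,0::real)}" by simp
    show "negligible (\<Union> ((\<lambda>t. {x::real\<times>real. fst x = t * snd x}) ` R))"
    proof (rule negligible_Union)
      show "finite ((\<lambda>t. {x::real\<times>real. fst x = t * snd x}) ` R)" using fR by simp
      fix T assume "T \<in> (\<lambda>t. {x::real\<times>real. fst x = t * snd x}) ` R"
      then obtain t where T: "T = {x::real\<times>real. fst x = t * snd x}" by blast
      have "T = {x::real\<times>real. 1 * fst x + (-t) * snd x = 0}" unfolding T by auto
      then show "negligible T" using negl_line[of 1 "-t"] by simp
    qed
  qed
  ultimately show ?thesis using negligible_subset by blast
qed


lemma S3_cub: "f \<in> S3 \<Longrightarrow> \<exists>A B C D. f = cub A B C D"
  by (auto simp: S3_def cub_def)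

lemma pointwise:
  fixes A1 B1 C1 D1 A2 B2 C2 D2 a b :: real
  defines "u1 \<equiv> 3*A1*a + B1*b" and "u2 \<equiv> B1*a + C1*b" and "u3 \<equiv> C1*a + 3*D1*b"
    and "v1 \<equiv> 3*A2*a + B2*b" and "v2 \<equiv> B2*a + C2*b" and "v3 \<equiv> C2*a + 3*D2*b"
  assumes good: "u1 * v2 - u2 * v1 \<noteq> 0 \<or> u1 * v3 - u3 * v1 \<noteq> 0 \<or> u2 * v3 - u3 * v2 \<noteq> 0"
  shows "fv.dim ((\<lambda>f. pi12 (taylor2 (a,b) f)) ` fv.span {cub A1 B1 C1 D1, cub A2 B2 C2 D2}) = 2"
proof -
  define g1 where "g1 = TT (a,b) (cub A1 B1 C1 D1)"
  define g2 where "g2 = TT (a,b) (cub A2 B2 C2 D2)"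
  have ind: "k1 = 0 \<and> k2 = 0" if h: "fscale k1 g1 + fscale k2 g2 = 0" for k1 k2
  proof -
    have "TT (a,b) (cub (k1*A1+k2*A2) (k1*B1+k2*B2) (k1*C1+k2*C2) (k1*D1+k2*D2)) = 0"
      using h by (simp add: TT_lin g1_def g2_def)
    note z = TT_zero[OF this]
    have e1: "k1*u1 + k2 * v1 = 0" using z(1) by (simp add: u1_def v1_def algebra_simps)
    have e2: "k1*u2 + k2 * v2 = 0" using z(2) by (simp add: u2_def v2_def algebra_simps)
    have e3: "k1*u3 + k2 * v3 = 0" using z(3) by (simp add: u3_def v3_def algebra_simps)
    have "k1 * (u1 * v2 - u2 * v1) = v2*(k1*u1 + k2 * v1) - v1*(k1*u2 + k2 * v2)" by (simp add: algebra_simps)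
    moreover have "k2 * (u1 * v2 - u2 * v1) = u1*(k1*u2 + k2 * v2) - u2*(k1*u1 + k2 * v1)" by (simp add: algebra_simps)
    moreover have "k1 * (u1 * v3 - u3 * v1) = v3*(k1*u1 + k2 * v1) - v1*(k1*u3 + k2 * v3)" by (simp add: algebra_simps)
    moreover have "k2 * (u1 * v3 - u3 * v1) = u1*(k1*u3 + k2 * v3) - u3*(k1*u1 + k2 * v1)" by (simp add: algebra_simps)
    moreover have "k1 * (u2 * v3 - u3 * v2) = v3*(k1*u2 + k2 * v2) - v2*(k1*u3 + k2 * v3)" by (simp add: algebra_simps)
    moreover have "k2 * (u2 * v3 - u3 * v2) = u2*(k1*u3 + k2 * v3) - u3*(k1*u2 + k2 * v2)" by (simp add: algebra_simps)
    ultimately show ?thesis using e1 e2 e3 good by auto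
  qed
  have fs1: "fscale 1 g = g" and fs0: "fscale 0 g = 0" for g :: rfun
    by (auto simp: fscale_def fun_eq_iff)
  have g1nz: "g1 \<noteq> 0" using ind[of 1 0] by (auto simp: fs1 fs0)
  have g2nz: "g2 \<noteq> 0" using ind[of 0 1] by (auto simp: fs1 fs0)
  have g12: "g1 \<noteq> g2"
  proof
    assume "g1 = g2"
    then have "fscale 1 g1 + fscale (-1) g2 = 0" by (auto simp: fscale_def fun_eq_iff)
    from ind[OF this] show False by simp
  qed
  have nspan: "g1 \<notin> fv.span {g2}"
  proof
    assume "g1 \<in> fv.span {g2}"
    then obtain k where "g1 = fscale k g2" by (auto simp: fv.span_singleton)
    then have "fscale 1 g1 + fscale (-k) g2 = 0" by (auto simp: fscale_def fun_eq_iff)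
    from ind[OF this] show False by simp
  qed
  have indep: "fv.independent {g1, g2}"
    using g12 nspan g2nz by (simp add: fv.independent_insert)
  have img: "(\<lambda>f. pi12 (taylor2 (a,b) f)) ` fv.span {cub A1 B1 C1 D1, cub A2 B2 C2 D2} = fv.span {g1, g2}"
    unfolding span2 g1_def g2_def
    by (auto simp: cub_lin TT_lin[symmetric] TT_def[symmetric] image_iff)
  show ?thesis unfolding img fv.dim_span_eq_card_independent[OF indep] using g12 by simp
qed


lemma plucker_dep:
  fixes A1 B1 C1 D1 A2 B2 C2 D2 :: real
  assumes "A1*B2 - A2*B1 = 0" "A1*C2 - A2*C1 = 0" "A1*D2 - A2*D1 = 0"
    "B1*C2 - B2*C1 = 0" "B1*D2 - B2*D1 = 0" "C1*D2 - C2*D1 = 0"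
  shows "\<exists>c1 c2. (c1 \<noteq> 0 \<or> c2 \<noteq> 0) \<and> c1*A1 + c2*A2 = 0 \<and> c1*B1 + c2*B2 = 0
     \<and> c1*C1 + c2*C2 = 0 \<and> c1*D1 + c2*D2 = 0"
proof -
  consider "A1 \<noteq> 0" | "B1 \<noteq> 0" | "C1 \<noteq> 0" | "D1 \<noteq> 0" | "A1 = 0 \<and> B1 = 0 \<and> C1 = 0 \<and> D1 = 0" by blast
  then show ?thesis
  proof cases
    case 1 then show ?thesis using assms by (intro exI[of _ A2] exI[of _ "-A1"]) (auto simp: algebra_simps)
  next
    case 2 then show ?thesis using assms by (intro exI[of _ B2] exI[of _ "-B1"]) (auto simp: algebra_simps)
  next
    case 3 then show ?thesis using assms by (intro exI[of _ C2] exI[of _ "-C1"]) (auto simp: algebra_simps)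
  next
    case 4 then show ?thesis using assms by (intro exI[of _ D2] exI[of _ "-D1"]) (auto simp: algebra_simps)
  next
    case 5 then show ?thesis by (intro exI[of _ 1] exI[of _ 0]) auto
  qed
qed

theorem lemma7p2:
  fixes f1 f2 :: rfun
  assumes "f1 \<in> S3" and "f2 \<in> S3"
    and "\<forall>c1 c2. (\<forall>x. c1 * f1 x + c2 * f2 x = 0) \<longrightarrow> c1 = 0 \<and> c2 = 0"
  shows "AE xi in lborel.
           vector_space.dim fscale
             ((\<lambda>f. pi12 (taylor2 xi f)) ` module.span fscale {f1, f2}) = 2"
proof -
  obtain A1 B1 C1 D1 where f1: "f1 = cub A1 B1 C1 D1" using S3_cub[OF assms(1)] by blast
  obtain A2 B2 C2 D2 where f2: "f2 = cub A2 B2 C2 D2" using S3_cub[OF assms(2)] by blast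
  define pAB where "pAB = A1*B2 - A2*B1"
  define pAC where "pAC = A1*C2 - A2*C1"
  define pAD where "pAD = A1*D2 - A2*D1"
  define pBC where "pBC = B1*C2 - B2*C1"
  define pBD where "pBD = B1*D2 - B2*D1"
  define pCD where "pCD = C1*D2 - C2*D1"
  define m12 where "m12 = (\<lambda>x::real\<times>real. (3*A1*fst x + B1 * snd x) * (B2*fst x + C2 * snd x) - (B1*fst x + C1 * snd x) * (3*A2*fst x + B2 * snd x))"
  define m13 where "m13 = (\<lambda>x::real\<times>real. (3*A1*fst x + B1 * snd x) * (C2*fst x + 3*D2 * snd x) - (C1*fst x + 3*D1 * snd x) * (3*A2*fst x + B2 * snd x))"
  define m23 where "m23 = (\<lambda>x::real\<times>real. (B1*fst x + C1 * snd x) * (C2*fst x + 3*D2 * snd x) - (C1*fst x + 3*D1 * snd x) * (B2*fst x + C2 * snd x))"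
  have q12: "{x. m12 x = 0} = {x. (3*pAB) * (fst x)^2 + (3*pAC) * fst x * snd x + pBC * (snd x)^2 = 0}"
    unfolding m12_def pAB_def pAC_def pBC_def by (rule Collect_cong) (simp add: algebra_simps power2_eq_square)
  have q13: "{x. m13 x = 0} = {x. (3*pAC) * (fst x)^2 + (9*pAD + pBC) * fst x * snd x + (3*pBD) * (snd x)^2 = 0}"
    unfolding m13_def pAC_def pAD_def pBC_def pBD_def by (rule Collect_cong) (simp add: algebra_simps power2_eq_square)
  have q23: "{x. m23 x = 0} = {x. pBC * (fst x)^2 + (3*pBD) * fst x * snd x + (3*pCD) * (snd x)^2 = 0}"
    unfolding m23_def pBC_def pBD_def pCD_def by (rule Collect_cong) (simp add: algebra_simps power2_eq_square)
  define N where "N = {x. m12 x = 0 \<and> m13 x = 0 \<and> m23 x = 0}"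
  have nz: "pAB \<noteq> 0 \<or> pAC \<noteq> 0 \<or> pBC \<noteq> 0 \<or> pAD \<noteq> 0 \<or> pBD \<noteq> 0 \<or> pCD \<noteq> 0"
  proof (rule ccontr)
    assume "\<not> ?thesis"
    then obtain c1 c2 where c: "c1 \<noteq> 0 \<or> c2 \<noteq> 0" "c1*A1 + c2*A2 = 0" "c1*B1 + c2*B2 = 0"
       "c1*C1 + c2*C2 = 0" "c1*D1 + c2*D2 = 0"
      using plucker_dep[of A1 B2 A2 B1 C2 C1 D2 D1]
      by (auto simp: pAB_def pAC_def pAD_def pBC_def pBD_def pCD_def)
    have "\<forall>x. c1 * f1 x + c2 * f2 x = 0"
    proof
      fix x :: "real \<times> real"
      obtain r s where x: "x = (r,s)" by (cases x)
      have "c1 * f1 x + c2 * f2 x = (c1*A1 + c2*A2) * r^3 + (c1*B1 + c2*B2) * r^2 * s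
          + (c1*C1 + c2*C2) * r * s^2 + (c1*D1 + c2*D2) * s^3"
        unfolding f1 f2 x cub_def by (simp add: algebra_simps)
      then show "c1 * f1 x + c2 * f2 x = 0" using c by simp
    qed
    then show False using assms(3) c(1) by blast
  qed
  have negN: "negligible N"
  proof -
    consider "pAB \<noteq> 0 \<or> pAC \<noteq> 0 \<or> pBC \<noteq> 0" | "pAD \<noteq> 0" | "pBD \<noteq> 0 \<or> pCD \<noteq> 0" using nz by blast
    then show ?thesis
    proof cases
      case 1
      have "negligible {x. m12 x = 0}" unfolding q12 by (rule negl_quad) (use 1 in auto)
      then show ?thesis by (rule negligible_subset) (auto simp: N_def)
    next
      case 2
      have "negligible {x. m13 x = 0} \<or> negligible {x. m12 x = 0}"
      proof (cases "pBC = 0")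
        case True
        have "9*pAD + pBC \<noteq> 0" using 2 True by simp
        then have "negligible {x. m13 x = 0}" unfolding q13 by (intro negl_quad) blast
        then show ?thesis by blast
      next
        case False
        then show ?thesis unfolding q12 by (intro disjI2 negl_quad) auto
      qed
      moreover have "N \<subseteq> {x. m13 x = 0}" "N \<subseteq> {x. m12 x = 0}" by (auto simp: N_def)
      ultimately show ?thesis using negligible_subset by blast
    next
      case 3
      have "negligible {x. m23 x = 0}" unfolding q23 by (rule negl_quad) (use 3 in auto)
      then show ?thesis by (rule negligible_subset) (auto simp: N_def)
    qed
  qed
  have "AE xi in lebesgue. vector_space.dim fscale
             ((\<lambda>f. pi12 (taylor2 xi f)) ` module.span fscale {f1, f2}) = 2"
  proof (rule AE_I')
    show "N \<in> null_sets lebesgue" using negN by (simp add: negligible_iff_null_sets)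
    show "{x \<in> space lebesgue. vector_space.dim fscale
             ((\<lambda>f. pi12 (taylor2 x f)) ` module.span fscale {f1, f2}) \<noteq> 2} \<subseteq> N"
    proof (rule subsetI, rule ccontr)
      fix x assume x1: "x \<in> {x \<in> space lebesgue. vector_space.dim fscale
             ((\<lambda>f. pi12 (taylor2 x f)) ` module.span fscale {f1, f2}) \<noteq> 2}"
        and x2: "x \<notin> N"
      obtain a b where xab: "x = (a,b)" by (cases x)
      have "fv.dim ((\<lambda>f. pi12 (taylor2 (a,b) f)) ` fv.span {cub A1 B1 C1 D1, cub A2 B2 C2 D2}) = 2"
        by (rule pointwise) (use x2 in \<open>simp add: N_def m12_def m13_def m23_def xab\<close>)
      then show False using x1 by (simp add: xab f1 f2)
    qed
  qed
  then show ?thesis by (simp add: AE_completion_iff)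
qed

end
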